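(* Let $\Gamma$ be a connected algebraic group defined over $\mathbb F_q$ with Frobenius map $F$, and $H$ a connected $F$-stable closed subgroup of $\Gamma$. Then the twisting operators commute with induction: for every class function $f$ on $H^F$, $t_1^*(\mathrm{Ind}_{H^F}^{\Gamma^F}f)=\mathrm{Ind}_{H^F}^{\Gamma^F}(t_1^*f)$, where on the left $t_1^*$ is the twisting operator of $\Gamma^F$ and on the right that of $H^F$.
   Context: Twisting operator for a connected group $X$ with Frobenius $F$: for $x\in X^F$ choose $\alpha\in X$ with $x=\alpha^{-1}F(\alpha)$; then $F(\alpha)\alpha^{-1}\in X^F$ and its $X^F$-conjugacy class depends only on that of $x$; $t_1^*$ is the linear operator on class functions of $X^F$ given by $t_1^*(h)(x)=h(F(\alpha)\alpha^{-1})$. *)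

theory Defs
  imports "HOL-Algebra.Algebra" Complex_Main
begin

text \<open>Abstract model: a group G (the points of the algebraic group over the
algebraic closure) with an endomorphism F (Frobenius).  The rational points
are the fixed points of F.\<close>

definition fixpts :: "('a, 'b) monoid_scheme \<Rightarrow> ('a \<Rightarrow> 'a) \<Rightarrow> 'a set" where
  "fixpts G F = {x \<in> carrier G. F x = x}"

text \<open>Lang's theorem for (G,F): every rational point has the form inv a * F a.\<close>
definition lang_property :: "('a, 'b) monoid_scheme \<Rightarrow> ('a \<Rightarrow> 'a) \<Rightarrow> bool" where
  "lang_property G F \<longleftrightarrow>
     (\<forall>x \<in> fixpts G F. \<exists>a \<in> carrier G. x = inv\<^bsub>G\<^esub> a \<otimes>\<^bsub>G\<^esub> F a)"

definition class_function :: "('a, 'b) monoid_scheme \<Rightarrow> ('a \<Rightarrow> 'a) \<Rightarrow> ('a \<Rightarrow> complex) \<Rightarrow> bool" where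
  "class_function G F f \<longleftrightarrow>
     (\<forall>g \<in> fixpts G F. \<forall>x \<in> fixpts G F. f (g \<otimes>\<^bsub>G\<^esub> x \<otimes>\<^bsub>G\<^esub> inv\<^bsub>G\<^esub> g) = f x)"

definition twist :: "('a, 'b) monoid_scheme \<Rightarrow> ('a \<Rightarrow> 'a) \<Rightarrow> ('a \<Rightarrow> complex) \<Rightarrow> 'a \<Rightarrow> complex" where
  "twist G F h x =
     (let a = (SOME a. a \<in> carrier G \<and> x = inv\<^bsub>G\<^esub> a \<otimes>\<^bsub>G\<^esub> F a)
      in h (F a \<otimes>\<^bsub>G\<^esub> inv\<^bsub>G\<^esub> a))"

definition induce :: "('a, 'b) monoid_scheme \<Rightarrow> ('a \<Rightarrow> 'a) \<Rightarrow> 'a set \<Rightarrow> ('a \<Rightarrow> complex) \<Rightarrow> 'a \<Rightarrow> complex" where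
  "induce G F H f g =
     (1 / of_nat (card (fixpts (G\<lparr>carrier := H\<rparr>) F))) *
     (\<Sum>x \<in> fixpts G F.
        if x \<otimes>\<^bsub>G\<^esub> g \<otimes>\<^bsub>G\<^esub> inv\<^bsub>G\<^esub> x \<in> H
        then f (x \<otimes>\<^bsub>G\<^esub> g \<otimes>\<^bsub>G\<^esub> inv\<^bsub>G\<^esub> x) else 0)"

end

theory Submission
  imports Defs
begin

locale twl = group G for G (structure) +
  fixes F H
  assumes homF: "F \<in> hom G G" and sub: "subgroup H G" and FH: "F ` H \<subseteq> H"
begin

lemma Fm[simp]: "x \<in> carrier G \<Longrightarrow> y \<in> carrier G \<Longrightarrow> F (x \<otimes> y) = F x \<otimes> F y"
  using homF by (simp add: hom_def)
lemma Fc[simp]: "x \<in> carrier G \<Longrightarrow> F x \<in> carrier G"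
  using homF by (auto simp add: hom_def)
lemma Fi[simp]: "x \<in> carrier G \<Longrightarrow> F (inv x) = inv (F x)"
proof -
  have "group_hom G G F" using homF group_axioms by (simp add: group_hom_def group_hom_axioms_def)
  moreover assume "x \<in> carrier G"
  ultimately show ?thesis by (rule group_hom.hom_inv)
qed
lemma HG[simp]: "x \<in> H \<Longrightarrow> x \<in> carrier G"
  using subgroup.subset[OF sub] by blast
lemma FHm[simp]: "x \<in> H \<Longrightarrow> F x \<in> H" using FH by blast
lemma Hm[simp]: "x \<in> H \<Longrightarrow> y \<in> H \<Longrightarrow> x \<otimes> y \<in> H" by (rule subgroup.m_closed[OF sub])
lemma Hi[simp]: "x \<in> H \<Longrightarrow> inv x \<in> H" by (rule subgroup.m_inv_closed[OF sub])
lemma Hinv_iff: "x \<in> carrier G \<Longrightarrow> inv x \<in> H \<longleftrightarrow> x \<in> H"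
proof -
  assume x: "x \<in> carrier G"
  have "inv (inv x) = x" using x by simp
  then show ?thesis using Hi[of "inv x"] Hi[of x] by auto
qed

lemma canc1[simp]: "x \<in> carrier G \<Longrightarrow> y \<in> carrier G \<Longrightarrow> x \<otimes> (inv x \<otimes> y) = y"
  by (simp add: m_assoc[symmetric])
lemma canc2[simp]: "x \<in> carrier G \<Longrightarrow> y \<in> carrier G \<Longrightarrow> inv x \<otimes> (x \<otimes> y) = y"
  by (simp add: m_assoc[symmetric])

abbreviation "GF \<equiv> fixpts G F"
abbreviation "Hs \<equiv> G\<lparr>carrier := H\<rparr>"
abbreviation "K \<equiv> fixpts Hs F"

lemma K_eq: "K = {x \<in> H. F x = x}" by (simp add: fixpts_def)
lemma GF_iff: "x \<in> GF \<longleftrightarrow> x \<in> carrier G \<and> F x = x" by (simp add: fixpts_def)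

lemma coset_card:
  assumes x0: "x0 \<in> GF" and b: "b \<in> carrier G" and xb: "x0 \<otimes> b \<in> H"
  shows "card {x \<in> GF. x \<otimes> b \<in> H} = card K"
proof -
  have "bij_betw (\<lambda>k. k \<otimes> x0) K {x \<in> GF. x \<otimes> b \<in> H}"
  proof (rule bij_betw_byWitness[where f'="\<lambda>x. x \<otimes> inv x0"])
    show "\<forall>k\<in>K. k \<otimes> x0 \<otimes> inv x0 = k" using x0 by (auto simp: K_eq GF_iff m_assoc)
    show "\<forall>x\<in>{x \<in> GF. x \<otimes> b \<in> H}. x \<otimes> inv x0 \<otimes> x0 = x" using x0 by (auto simp: GF_iff m_assoc)
    show "(\<lambda>k. k \<otimes> x0) ` K \<subseteq> {x \<in> GF. x \<otimes> b \<in> H}"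
      using x0 xb b by (auto simp: K_eq GF_iff m_assoc)
    show "(\<lambda>x. x \<otimes> inv x0) ` {x \<in> GF. x \<otimes> b \<in> H} \<subseteq> K"
    proof
      fix z assume "z \<in> (\<lambda>x. x \<otimes> inv x0) ` {x \<in> GF. x \<otimes> b \<in> H}"
      then obtain x where x: "x \<in> GF" "x \<otimes> b \<in> H" and z: "z = x \<otimes> inv x0" by auto
      have "(x \<otimes> b) \<otimes> inv (x0 \<otimes> b) \<in> H" using x xb by simp
      also have "(x \<otimes> b) \<otimes> inv (x0 \<otimes> b) = z" using x x0 b z
        by (simp add: GF_iff inv_mult_group m_assoc)
      finally show "z \<in> K" using x x0 z by (simp add: K_eq GF_iff)
    qed
  qed
  thus ?thesis by (rule bij_betw_same_card[symmetric])
qed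


lemma main:
  assumes a: "a \<in> carrier G" and g: "g \<in> GF" and ga: "g = inv a \<otimes> F a"
    and fin: "finite GF" and langH: "lang_property Hs F" and cf: "class_function Hs F f"
  shows "(\<Sum>x\<in>GF. if x \<otimes> (F a \<otimes> inv a) \<otimes> inv x \<in> H then f (x \<otimes> (F a \<otimes> inv a) \<otimes> inv x) else 0)
       = (\<Sum>y\<in>GF. if y \<otimes> g \<otimes> inv y \<in> H then twist Hs F f (y \<otimes> g \<otimes> inv y) else 0)"
proof -
  have gc: "g \<in> carrier G" and Fg: "F g = g" using g by (auto simp: GF_iff)
  have Fa: "F a = a \<otimes> g" using ga a gc by simp
  define R where "R x y \<longleftrightarrow> x \<otimes> a \<otimes> inv y \<in> H" for x y
  define T where "T x = (if x \<otimes> (F a \<otimes> inv a) \<otimes> inv x \<in> H then f (x \<otimes> (F a \<otimes> inv a) \<otimes> inv x) else 0)" for x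
  define U where "U y = (if y \<otimes> g \<otimes> inv y \<in> H then twist Hs F f (y \<otimes> g \<otimes> inv y) else 0)" for y
  have lang: "\<exists>d\<in>H. z = inv d \<otimes> F d" if "z \<in> H" "F z = z" for z
  proof -
    have "z \<in> K" using that by (simp add: K_eq)
    then obtain d where d: "d \<in> H" "z = inv\<^bsub>Hs\<^esub> d \<otimes>\<^bsub>Hs\<^esub> F d"
      using langH unfolding lang_property_def by auto
    thus ?thesis using sub by auto
  qed
  have A: "\<exists>y\<in>GF. R x y" if x: "x \<in> GF" and c: "x \<otimes> (F a \<otimes> inv a) \<otimes> inv x \<in> H" for x
  proof -
    define z where "z = x \<otimes> (F a \<otimes> inv a) \<otimes> inv x"
    have xc: "x \<in> carrier G" "F x = x" using x by (auto simp: GF_iff)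
    have "inv z \<in> H" using c by (simp add: z_def)
    moreover have "F (inv z) = inv z" using c xc a gc Fg Fa by (simp add: z_def m_assoc inv_mult_group)
    ultimately
    obtain d where d: "d \<in> H" "inv z = inv d \<otimes> F d" using lang by blast
    have Fd: "F d = d \<otimes> inv z" using d by simp
    show ?thesis
    proof (intro bexI)
      show "R x (d \<otimes> x \<otimes> a)" using d xc a by (simp add: R_def m_assoc inv_mult_group)
      show "d \<otimes> x \<otimes> a \<in> GF" using d xc a gc Fa Fd
        by (simp add: GF_iff z_def m_assoc inv_mult_group)
    qed
  qed
  have B: "\<exists>x\<in>GF. R x y" if y: "y \<in> GF" and c: "y \<otimes> g \<otimes> inv y \<in> H" for y
  proof -
    have yc: "y \<in> carrier G" "F y = y" using y by (auto simp: GF_iff)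
    have "F (y \<otimes> g \<otimes> inv y) = y \<otimes> g \<otimes> inv y" using yc gc Fg by simp
    then obtain c where cc: "c \<in> H" "y \<otimes> g \<otimes> inv y = inv c \<otimes> F c" using lang c by blast
    have Fc: "F c = c \<otimes> (y \<otimes> g \<otimes> inv y)" using cc by simp
    show ?thesis
    proof (intro bexI)
      show "R (c \<otimes> y \<otimes> inv a) y" using cc yc a by (simp add: R_def m_assoc)
      show "c \<otimes> y \<otimes> inv a \<in> GF" using cc yc a gc Fa Fc
        by (simp add: GF_iff m_assoc inv_mult_group)
    qed
  qed
  have C: "T x = U y" if x: "x \<in> GF" and y: "y \<in> GF" and r: "R x y" for x y
  proof -
    have xc: "x \<in> carrier G" "F x = x" using x by (auto simp: GF_iff)
    have yc: "y \<in> carrier G" "F y = y" using y by (auto simp: GF_iff)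
    define c where "c = x \<otimes> a \<otimes> inv y"
    define w where "w = y \<otimes> g \<otimes> inv y"
    have cH: "c \<in> H" using r by (simp add: R_def c_def)
    have wc: "w = inv c \<otimes> F c" using xc yc a gc Fa
      by (simp add: c_def w_def m_assoc inv_mult_group)
    have wH: "w \<in> H" using wc cH by simp
    have Fw: "F w = w" using yc gc Fg by (simp add: w_def)
    have Fc: "F c = c \<otimes> w" using wc cH by simp
    have wG: "w \<in> carrier G" using wH by simp
    have e1: "x \<otimes> (F a \<otimes> inv a) \<otimes> inv x = c \<otimes> w \<otimes> inv c"
      using xc yc a gc Fa by (simp add: c_def w_def m_assoc inv_mult_group)
    have cwH: "c \<otimes> w \<otimes> inv c \<in> H" using cH wH by simp
    have Tx: "T x = f (c \<otimes> w \<otimes> inv c)" using e1 cwH by (simp add: T_def)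
    have eq: "(\<lambda>e. e \<in> carrier Hs \<and> w = inv\<^bsub>Hs\<^esub> e \<otimes>\<^bsub>Hs\<^esub> F e) = (\<lambda>e. e \<in> H \<and> w = inv e \<otimes> F e)"
      using sub by (auto simp: fun_eq_iff)
    define e where "e = (SOME e. e \<in> H \<and> w = inv e \<otimes> F e)"
    have "\<exists>e. e \<in> H \<and> w = inv e \<otimes> F e" using cH wc by blast
    then have "e \<in> H \<and> w = inv e \<otimes> F e" unfolding e_def by (rule someI_ex)
    then have ee: "e \<in> H" "w = inv e \<otimes> F e" by auto
    have Fe: "F e = e \<otimes> w" using ee by simp
    have Uy: "U y = f (F e \<otimes> inv e)"
    proof -
      have "twist Hs F f w = f (F e \<otimes> inv e)"
        unfolding twist_def Let_def eq e_def[symmetric] using ee(1) sub by simp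
      thus ?thesis using wH by (simp add: U_def w_def[symmetric])
    qed
    have hK: "c \<otimes> inv e \<in> K" using cH ee(1) Fc Fe wG by (simp add: K_eq inv_mult_group m_assoc)
    have tK: "F e \<otimes> inv e \<in> K" using ee(1) Fe Fw wG wH by (simp add: K_eq inv_mult_group m_assoc)
    have "f ((c \<otimes> inv e) \<otimes> (F e \<otimes> inv e) \<otimes> inv (c \<otimes> inv e)) = f (F e \<otimes> inv e)"
      using cf hK tK sub unfolding class_function_def by (auto simp: K_eq)
    moreover have "(c \<otimes> inv e) \<otimes> (F e \<otimes> inv e) \<otimes> inv (c \<otimes> inv e) = c \<otimes> w \<otimes> inv c"
      using cH ee(1) Fe wG by (simp add: inv_mult_group m_assoc)
    ultimately show ?thesis using Tx Uy by simp
  qed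
  have KGF: "K \<subseteq> GF" by (auto simp: K_eq GF_iff)
  have finK: "finite K" using fin KGF finite_subset by blast
  have "\<one> \<in> K" using sub by (simp add: K_eq subgroup.one_closed hom_one[OF homF])
  then have kpos: "card K \<noteq> 0" using finK by auto
  define k :: complex where "k = of_nat (card K)"
  have k0: "k \<noteq> 0" using kpos by (simp add: k_def)
  have fibx: "card {y \<in> GF. R x y} = card K" if x: "x \<in> GF" and c: "x \<otimes> (F a \<otimes> inv a) \<otimes> inv x \<in> H" for x
  proof -
    have xc: "x \<in> carrier G" using x by (simp add: GF_iff)
    obtain y0 where y0: "y0 \<in> GF" "R x y0" using A[OF x c] by blast
    have eqv: "R x y \<longleftrightarrow> y \<otimes> (inv a \<otimes> inv x) \<in> H" if "y \<in> GF" for y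
    proof -
      have yc: "y \<in> carrier G" using that by (simp add: GF_iff)
      have "inv (x \<otimes> a \<otimes> inv y) = y \<otimes> (inv a \<otimes> inv x)" using xc yc a by (simp add: inv_mult_group m_assoc)
      thus ?thesis unfolding R_def using Hinv_iff[of "x \<otimes> a \<otimes> inv y"] xc yc a by simp
    qed
    have "{y \<in> GF. R x y} = {y \<in> GF. y \<otimes> (inv a \<otimes> inv x) \<in> H}" using eqv by blast
    also have "card \<dots> = card K" using coset_card[of y0 "inv a \<otimes> inv x"] y0 eqv a xc by simp
    finally show ?thesis .
  qed
  have fiby: "card {x \<in> GF. R x y} = card K" if y: "y \<in> GF" and c: "y \<otimes> g \<otimes> inv y \<in> H" for y
  proof -
    have yc: "y \<in> carrier G" using y by (simp add: GF_iff)
    obtain x0 where x0: "x0 \<in> GF" "R x0 y" using B[OF y c] by blast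
    have eqv: "R x y \<longleftrightarrow> x \<otimes> (a \<otimes> inv y) \<in> H" if "x \<in> GF" for x
      using that yc a by (simp add: R_def GF_iff m_assoc)
    have "{x \<in> GF. R x y} = {x \<in> GF. x \<otimes> (a \<otimes> inv y) \<in> H}" using eqv by blast
    also have "card \<dots> = card K" using coset_card[of x0 "a \<otimes> inv y"] x0 eqv a yc by simp
    finally show ?thesis .
  qed
  have "(\<Sum>x\<in>GF. T x) = (\<Sum>x\<in>GF. \<Sum>y\<in>{y \<in> GF. R x y}. T x / k)"
  proof (rule sum.cong[OF refl])
    fix x assume x: "x \<in> GF"
    show "T x = (\<Sum>y\<in>{y \<in> GF. R x y}. T x / k)"
    proof (cases "x \<otimes> (F a \<otimes> inv a) \<otimes> inv x \<in> H")
      case True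
      then show ?thesis using fibx[OF x True] k0 by (simp add: k_def)
    next
      case False
      then show ?thesis by (simp add: T_def)
    qed
  qed
  also have "\<dots> = (\<Sum>x\<in>GF. \<Sum>y\<in>{y \<in> GF. R x y}. U y / k)"
    using C by (intro sum.cong refl) auto
  also have "\<dots> = (\<Sum>y\<in>GF. \<Sum>x\<in>{x \<in> GF. R x y}. U y / k)"
    by (rule sum.swap_restrict[OF fin fin])
  also have "\<dots> = (\<Sum>y\<in>GF. U y)"
  proof (rule sum.cong[OF refl])
    fix y assume y: "y \<in> GF"
    show "(\<Sum>x\<in>{x \<in> GF. R x y}. U y / k) = U y"
    proof (cases "y \<otimes> g \<otimes> inv y \<in> H")
      case True
      then show ?thesis using fiby[OF y True] k0 by (simp add: k_def)
    next
      case False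
      then show ?thesis by (simp add: U_def)
    qed
  qed
  finally show ?thesis by (simp add: T_def U_def)
qed
end

theorem lemma3p7:
  fixes G :: "('a, 'b) monoid_scheme" and F :: "'a \<Rightarrow> 'a" and H :: "'a set"
    and f :: "'a \<Rightarrow> complex"
  assumes "group G"
    and "F \<in> hom G G"
    and "subgroup H G"
    and "F ` H \<subseteq> H"
    and "finite (fixpts G F)"
    and "lang_property G F"
    and "lang_property (G\<lparr>carrier := H\<rparr>) F"
    and "class_function (G\<lparr>carrier := H\<rparr>) F f"
  shows "\<forall>g \<in> fixpts G F.
           twist G F (induce G F H f) g = induce G F H (twist (G\<lparr>carrier := H\<rparr>) F f) g"
proof
  fix g assume g: "g \<in> fixpts G F"
  have "twl G F H" using assms by (simp add: twl_def twl_axioms_def)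
  then interpret twl G F H .
  have "\<exists>a. a \<in> carrier G \<and> g = inv\<^bsub>G\<^esub> a \<otimes>\<^bsub>G\<^esub> F a"
    using assms(6) g unfolding lang_property_def by blast
  define a where "a = (SOME a. a \<in> carrier G \<and> g = inv\<^bsub>G\<^esub> a \<otimes>\<^bsub>G\<^esub> F a)"
  have "a \<in> carrier G \<and> g = inv\<^bsub>G\<^esub> a \<otimes>\<^bsub>G\<^esub> F a"
    unfolding a_def by (rule someI_ex) fact
  then have a: "a \<in> carrier G" "g = inv\<^bsub>G\<^esub> a \<otimes>\<^bsub>G\<^esub> F a" by auto
  have "twist G F (induce G F H f) g = induce G F H f (F a \<otimes>\<^bsub>G\<^esub> inv\<^bsub>G\<^esub> a)"
    unfolding twist_def Let_def a_def[symmetric] by (rule refl)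
  also have "\<dots> = induce G F H (twist (G\<lparr>carrier := H\<rparr>) F f) g"
    unfolding induce_def main[OF a(1) g a(2) assms(5) assms(7) assms(8)] by (rule refl)
  finally show "twist G F (induce G F H f) g = induce G F H (twist (G\<lparr>carrier := H\<rparr>) F f) g" .
qed

end
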